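(* If $G$ is a subcubic graph of order $n\ge 1$, then $\gamma_{e,f}^*(G)\ge \frac16\left(\sqrt{2n+\frac{49}{36}}+\frac76\right)$.
   Context: All graphs are finite, simple and undirected; subcubic means maximum degree at most $3$. The fractional porous exponential domination number $\gamma_{e,f}^*(G)$ is the optimum value of the linear program: minimize $\sum_{u\in V(G)}x(u)$ subject to $\sum_{u\in V(G)}\left(\frac12\right)^{\mathrm{dist}_G(u,v)-1}x(u)\ge 1$ for every $v\in V(G)$ and $x\ge 0$, where $\mathrm{dist}_G$ is the usual graph distance ($\infty$ between different components) and $\left(\frac12\right)^\infty=0$. *)

theory Defs
  imports Complex_Main "HOL-Library.Extended_Nat"
begin

definition simple_graph :: "'a set \<Rightarrow> ('a \<Rightarrow> 'a \<Rightarrow> bool) \<Rightarrow> bool" where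
  "simple_graph V E \<longleftrightarrow> finite V \<and> (\<forall>u v. E u v \<longrightarrow> u \<in> V \<and> v \<in> V)
     \<and> (\<forall>u v. E u v \<longrightarrow> E v u) \<and> (\<forall>u. \<not> E u u)"

definition degree :: "('a \<Rightarrow> 'a \<Rightarrow> bool) \<Rightarrow> 'a \<Rightarrow> nat" where
  "degree E u = card {v. E u v}"

definition subcubic :: "'a set \<Rightarrow> ('a \<Rightarrow> 'a \<Rightarrow> bool) \<Rightarrow> bool" where
  "subcubic V E \<longleftrightarrow> simple_graph V E \<and> (\<forall>u\<in>V. degree E u \<le> 3)"

inductive walk :: "'a set \<Rightarrow> ('a \<Rightarrow> 'a \<Rightarrow> bool) \<Rightarrow> 'a \<Rightarrow> 'a \<Rightarrow> nat \<Rightarrow> bool"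
  for V E where
  walk_nil: "u \<in> V \<Longrightarrow> walk V E u u 0"
| walk_step: "E u w \<Longrightarrow> walk V E w v k \<Longrightarrow> walk V E u v (Suc k)"

text \<open>Graph distance; infinity (top of enat) between different components.\<close>
definition gdist :: "'a set \<Rightarrow> ('a \<Rightarrow> 'a \<Rightarrow> bool) \<Rightarrow> 'a \<Rightarrow> 'a \<Rightarrow> enat" where
  "gdist V E u v = (INF k \<in> {k. walk V E u v k}. enat k)"

definition exp_weight :: "enat \<Rightarrow> real" where
  "exp_weight d = (case d of enat k \<Rightarrow> (1/2) powi (int k - 1) | \<infinity> \<Rightarrow> 0)"

definition frac_porous_exp_dom :: "'a set \<Rightarrow> ('a \<Rightarrow> 'a \<Rightarrow> bool) \<Rightarrow> real" where
  "frac_porous_exp_dom V E = Inf {(\<Sum>u\<in>V. x u) | x :: 'a \<Rightarrow> real.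
      (\<forall>u\<in>V. 0 \<le> x u) \<and>
      (\<forall>v\<in>V. (\<Sum>u\<in>V. exp_weight (gdist V E u v) * x u) \<ge> 1)}"

end

theory Submission imports Defs "HOL-Analysis.Convex" begin

lemma walk_in_V: "walk V E u v k \<Longrightarrow> v \<in> V"
  by (induction rule: walk.induct) auto

lemma walk_snoc_rev:
  assumes sg: "simple_graph V E"
  shows "walk V E u v m \<Longrightarrow> m = Suc k \<Longrightarrow> \<exists>w. walk V E u w k \<and> E w v"
proof (induction arbitrary: k rule: walk.induct)
  case (walk_nil u) then show ?case by simp
next
  case (walk_step u w v j)
  show ?case
  proof (cases j)
    case 0
    with walk_step.hyps(2) have "w = v" by (auto elim: walk.cases)
    moreover have "u \<in> V" using sg walk_step.hyps(1) unfolding simple_graph_def by blast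
    ultimately show ?thesis using walk_step 0 by (auto intro: walk.walk_nil)
  next
    case (Suc j')
    then obtain w' where "walk V E w w' j'" "E w' v" using walk_step.IH by blast
    then show ?thesis using walk_step Suc by (auto intro: walk.walk_step)
  qed
qed

lemma gdist_le: "walk V E u v k \<Longrightarrow> gdist V E u v \<le> enat k"
  unfolding gdist_def by (rule INF_lower2[of k]) auto

lemma gdist_enat: assumes "gdist V E u v = enat k" shows "walk V E u v k"
proof -
  let ?K = "{k. walk V E u v k}"
  have ne: "?K \<noteq> {}"
  proof
    assume "?K = {}"
    then have "gdist V E u v = (INF k\<in>{}. enat k)" unfolding gdist_def by (simp only:)
    also have "\<dots> = \<infinity>" by (simp add: top_enat_def)
    finally have "gdist V E u v = \<infinity>" .
    with assms show False by simp
  qed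
  define m where "m = (LEAST k. walk V E u v k)"
  have mK: "walk V E u v m" using ne unfolding m_def by (metis Collect_empty_eq LeastI)
  have "gdist V E u v = enat m"
  proof (rule antisym)
    show "gdist V E u v \<le> enat m" using gdist_le[OF mK] .
    show "enat m \<le> gdist V E u v" unfolding gdist_def
      by (rule INF_greatest) (auto simp: m_def intro: Least_le)
  qed
  with assms mK show ?thesis by simp
qed

lemma gdist_self: "u \<in> V \<Longrightarrow> gdist V E u u = enat 0"
  using gdist_le[OF walk.walk_nil, of u V E] by (simp add: zero_enat_def[symmetric])

lemma gdist_zero: "gdist V E u v = enat 0 \<Longrightarrow> u = v"
  by (drule gdist_enat) (auto elim: walk.cases)

lemma ew_enat: "exp_weight (enat k) = 2 * (1/2)^k"
proof -
  have "exp_weight (enat k) = (1/2::real) powi (int k - 1)" by (simp add: exp_weight_def)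
  also have "\<dots> = (1/2) powi (int k) / (1/2) powi 1" by (rule power_int_diff) simp
  finally show ?thesis by simp
qed

lemma ew_nonneg: "exp_weight d \<ge> 0"
  by (cases d) (auto simp: ew_enat exp_weight_def)

lemma ew_le1: "u \<noteq> v \<Longrightarrow> exp_weight (gdist V E u v) \<le> 1"
proof (cases "gdist V E u v")
  case (enat k)
  assume "u \<noteq> v"
  then have "k \<noteq> 0" using gdist_zero enat by metis
  then have "(1/2::real)^k \<le> 1/2" using power_decreasing[of 1 k "1/2::real"] by auto
  then show ?thesis using enat by (simp add: ew_enat)
qed (simp add: exp_weight_def)


lemma Q_bound:
  assumes sc: "subcubic V E" and uV: "u \<in> V"
  shows "(\<Sum>v\<in>V. (exp_weight (gdist V E u v))\<^sup>2) \<le> 10"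
proof -
  have sg: "simple_graph V E" and deg: "\<And>w. w \<in> V \<Longrightarrow> card {v. E w v} \<le> 3"
    using sc by (auto simp: subcubic_def degree_def)
  have finV: "finite V" and EV: "\<And>a b. E a b \<Longrightarrow> a \<in> V \<and> b \<in> V"
    and Esym: "\<And>a b. E a b \<Longrightarrow> E b a"
    using sg by (auto simp: simple_graph_def)
  define d where "d v = gdist V E u v" for v
  define F where "F = {v\<in>V. d v \<noteq> \<infinity>}"
  define A where "A = F - {u}"
  define dn where "dn v = the_enat (d v)" for v
  define h where "h v = 4 * (1/4::real)^(dn v)" for v
  have finF: "finite F" and finA: "finite A" using finV by (auto simp: F_def A_def)
  have dF: "v \<in> F \<Longrightarrow> d v = enat (dn v)" for v by (auto simp: F_def dn_def)
  have hF: "v \<in> F \<Longrightarrow> (exp_weight (d v))\<^sup>2 = h v" for v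
    by (simp add: dF h_def ew_enat power_mult_distrib power2_eq_square power_mult_distrib[symmetric])
  have uF: "u \<in> F" and dnu: "dn u = 0" using uV gdist_self[OF uV, of E]
    by (auto simp: F_def d_def dn_def)
  have hu: "h u = 4" by (simp add: h_def dnu)
  have hnn: "h v \<ge> 0" for v by (simp add: h_def)
  have par_ex: "\<exists>w. E w v \<and> w \<in> F \<and> dn w + 1 \<le> dn v" if vA: "v \<in> A" for v
  proof -
    have "v \<in> F" "v \<noteq> u" using vA by (auto simp: A_def)
    then have dv: "d v = enat (dn v)" by (simp add: dF)
    have "dn v \<noteq> 0" using dv gdist_zero[of V E u v] \<open>v \<noteq> u\<close> by (auto simp: d_def)
    then obtain k where k: "dn v = Suc k" by (cases "dn v") auto
    have "walk V E u v (Suc k)" using gdist_enat[of V E u v] dv k by (simp add: d_def)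
    then obtain w where w: "walk V E u w k" "E w v" using walk_snoc_rev[OF sg] by blast
    have "d w \<le> enat k" using gdist_le[OF w(1)] by (simp add: d_def)
    then obtain j where "d w = enat j" "j \<le> k" by (cases "d w") auto
    moreover have "w \<in> V" using EV w(2) by blast
    ultimately have "w \<in> F" "dn w \<le> k" by (auto simp: F_def dn_def)
    then show ?thesis using w k by auto
  qed
  define par where "par v = (SOME w. E w v \<and> w \<in> F \<and> dn w + 1 \<le> dn v)" for v
  have par: "E (par v) v" "par v \<in> F" "dn (par v) + 1 \<le> dn v" if "v \<in> A" for v
    using someI_ex[OF par_ex[OF that]] unfolding par_def by auto
  have hpar: "h v \<le> h (par v) / 4" if "v \<in> A" for v
  proof -
    have "(1/4::real)^(dn v) \<le> (1/4)^(dn (par v) + 1)"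
      by (rule power_decreasing) (use par(3)[OF that] in auto)
    then show ?thesis by (simp add: h_def)
  qed
  define C where "C w = {v \<in> A. par v = w}" for w
  have Csub: "C w \<subseteq> {v. E w v}" for w using par(1) Esym by (auto simp: C_def)
  have finN: "finite {v. E w v}" for w using finV EV by (metis (no_types, lifting) finite_subset mem_Collect_eq subsetI)
  have C3: "card (C w) \<le> 3" if "w \<in> F" for w
  proof -
    have "card (C w) \<le> card {v. E w v}" by (rule card_mono[OF finN Csub])
    also have "\<dots> \<le> 3" using deg that by (auto simp: F_def)
    finally show ?thesis .
  qed
  have C2: "card (C w) \<le> 2" if "w \<in> A" for w
  proof -
    have "par w \<notin> C w"
    proof
      assume "par w \<in> C w"
      then have "par w \<in> A" "par (par w) = w" by (auto simp: C_def)
      then show False using par(3)[OF that] par(3)[OF \<open>par w \<in> A\<close>] by simp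
    qed
    moreover have "par w \<in> {v. E w v}" using par(1)[OF that] Esym by auto
    ultimately have "C w \<subseteq> {v. E w v} - {par w}" using Csub by auto
    then have "card (C w) \<le> card ({v. E w v} - {par w})" by (intro card_mono) (auto simp: finN)
    also have "\<dots> = card {v. E w v} - 1" using \<open>par w \<in> {v. E w v}\<close> finN by (simp add: card_Diff_singleton)
    also have "\<dots> \<le> 2" using deg[of w] that by (auto simp: A_def F_def)
    finally show ?thesis .
  qed
  define T where "T = (\<Sum>v\<in>A. h v)"
  have "T \<le> (\<Sum>v\<in>A. h (par v) / 4)" unfolding T_def by (rule sum_mono) (rule hpar)
  also have "\<dots> = (\<Sum>w\<in>F. (\<Sum>v\<in>C w. h (par v) / 4))"
    unfolding C_def by (rule sum.group[symmetric]) (use finA finF par(2) in auto)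
  also have "\<dots> = (\<Sum>w\<in>F. h w / 4 * card (C w))"
    by (rule sum.cong) (auto simp: C_def)
  also have "\<dots> = h u / 4 * card (C u) + (\<Sum>w\<in>A. h w / 4 * card (C w))"
    unfolding A_def using finF uF by (simp add: sum.remove)
  also have "\<dots> \<le> 4 / 4 * 3 + (\<Sum>w\<in>A. h w / 4 * 2)"
  proof (rule add_mono)
    show "h u / 4 * card (C u) \<le> 4 / 4 * 3" using C3[OF uF] hu by simp
    show "(\<Sum>w\<in>A. h w / 4 * card (C w)) \<le> (\<Sum>w\<in>A. h w / 4 * 2)"
      by (rule sum_mono, rule mult_left_mono) (use C2 hnn in auto)
  qed
  also have "\<dots> = 3 + T / 2" unfolding T_def by (simp add: sum_divide_distrib[symmetric] sum_distrib_right[symmetric])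
  finally have T6: "T \<le> 6" by simp
  have "(\<Sum>v\<in>V. (exp_weight (d v))\<^sup>2) = (\<Sum>v\<in>F. (exp_weight (d v))\<^sup>2)"
    by (rule sum.mono_neutral_right) (use finV in \<open>auto simp: F_def exp_weight_def\<close>)
  also have "\<dots> = (\<Sum>v\<in>F. h v)" by (rule sum.cong) (auto simp: hF)
  also have "\<dots> = h u + T" unfolding T_def A_def using finF uF by (simp add: sum.remove)
  finally show ?thesis using T6 hu by (simp add: d_def)
qed


lemma arith_final:
  fixes S :: real and n :: nat
  assumes n1: "n \<ge> 1" and a: "real n \<le> real n * S + S" and b: "real n \<le> 10 * S^2"
  shows "(1/6) * (sqrt (2 * real n + 49/36) + 7/6) \<le> S"
proof -
  have Sge: "S \<ge> real n / (real n + 1)" using a by (simp add: field_simps)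
  have "real n / (real n + 1) \<ge> 1/2" using n1 by (simp add: field_simps)
  then have S12: "S \<ge> 1/2" using Sge by linarith
  have key: "real n \<le> 18 * S^2 - 7 * S"
  proof (cases "n \<le> 8")
    case True
    define t where "t = real n / (real n + 1)"
    have t12: "t \<ge> 1/2" using n1 by (simp add: t_def field_simps)
    have "18 * S^2 - 7 * S - (18 * t^2 - 7 * t) = (S - t) * (18 * (S + t) - 7)"
      by (simp add: algebra_simps power2_eq_square)
    also have "\<dots> \<ge> 0" using Sge t12 S12 by (intro mult_nonneg_nonneg) (auto simp: t_def[symmetric])
    finally have m: "18 * t^2 - 7 * t \<le> 18 * S^2 - 7 * S" by simp
    have "n \<in> {1,2,3,4,5,6,7,8}" using True n1 by auto
    then have "real n \<le> 18 * t^2 - 7 * t" by (auto simp: t_def power2_eq_square)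
    then show ?thesis using m by simp
  next
    case False
    then have "real n \<ge> 9" by simp
    then have "real n / (real n + 1) \<ge> 9/10" by (simp add: field_simps)
    then have "S \<ge> 9/10" using Sge by linarith
    then have "7 * S \<le> 8 * S^2" by (simp add: power2_eq_square)
    then show ?thesis using b by simp
  qed
  have "sqrt (2 * real n + 49/36) \<le> sqrt ((6 * S - 7/6)^2)"
    using key by (intro real_sqrt_le_mono) (simp add: power2_eq_square algebra_simps)
  also have "\<dots> = 6 * S - 7/6" using S12 by simp
  finally show ?thesis by simp
qed


theorem corollary2:
  fixes V :: "'a set" and E :: "'a \<Rightarrow> 'a \<Rightarrow> bool" and n :: nat
  assumes "subcubic V E" and "card V = n" and "n \<ge> 1"
  shows "frac_porous_exp_dom V E \<ge> (1/6) * (sqrt (2 * real n + 49/36) + 7/6)"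
proof -
  have sc: "subcubic V E" by fact
  have finV: "finite V" using sc by (simp add: subcubic_def simple_graph_def)
  let ?w = "\<lambda>u v. exp_weight (gdist V E u v)"
  let ?P = "{(\<Sum>u\<in>V. x u) | x :: 'a \<Rightarrow> real.
      (\<forall>u\<in>V. 0 \<le> x u) \<and>
      (\<forall>v\<in>V. (\<Sum>u\<in>V. exp_weight (gdist V E u v) * x u) \<ge> 1)}"
  have wvv: "?w v v = 2" if "v \<in> V" for v using gdist_self[OF that] by (simp add: ew_enat)
  have ne: "?P \<noteq> {}"
  proof -
    have "(\<Sum>u\<in>V. ?w u v * 1) \<ge> 1" if vV: "v \<in> V" for v
    proof -
      have "?w v v * 1 \<le> (\<Sum>u\<in>V. ?w u v * 1)"
        by (rule member_le_sum) (use vV finV ew_nonneg in auto)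
      then show ?thesis using wvv[OF vV] by simp
    qed
    then have "(\<Sum>u\<in>V. (\<lambda>_. 1::real) u) \<in> ?P"
      by (intro CollectI exI[where x="\<lambda>_. 1::real"]) simp
    then show ?thesis by (metis empty_iff)
  qed
  have bound: "(1/6) * (sqrt (2 * real n + 49/36) + 7/6) \<le> y" if "y \<in> ?P" for y
  proof -
    obtain x where y: "y = (\<Sum>u\<in>V. x u)" and xnn: "\<forall>u\<in>V. 0 \<le> x u"
      and feas: "\<forall>v\<in>V. (\<Sum>u\<in>V. ?w u v * x u) \<ge> 1"
      using \<open>y \<in> ?P\<close> unfolding mem_Collect_eq by (elim exE conjE) simp
    define S where "S = (\<Sum>u\<in>V. x u)"
    define s where "s v = (\<Sum>u\<in>V. ?w u v * x u)" for v
    have s1: "v \<in> V \<Longrightarrow> s v \<ge> 1" for v using feas by (simp add: s_def)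
    have sle: "s v \<le> S + x v" if vV: "v \<in> V" for v
    proof -
      have "s v = ?w v v * x v + (\<Sum>u\<in>V-{v}. ?w u v * x u)"
        unfolding s_def using finV vV by (simp add: sum.remove)
      also have "\<dots> \<le> 2 * x v + (\<Sum>u\<in>V-{v}. x u)"
      proof (rule add_mono)
        show "?w v v * x v \<le> 2 * x v" using wvv[OF vV] by simp
        show "(\<Sum>u\<in>V-{v}. ?w u v * x u) \<le> (\<Sum>u\<in>V-{v}. x u)"
        proof (rule sum_mono)
          fix u assume "u \<in> V - {v}"
          then have "?w u v \<le> 1" "x u \<ge> 0" using ew_le1[of u v V E] xnn by auto
          then show "?w u v * x u \<le> x u" by (simp add: mult_left_le_one_le ew_nonneg)
        qed
      qed
      also have "\<dots> = x v + S" unfolding S_def using finV vV by (simp add: sum.remove)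
      finally show ?thesis by simp
    qed
    have a: "real n \<le> real n * S + S"
    proof -
      have "real n = (\<Sum>v\<in>V. 1)" using assms(2) by simp
      also have "\<dots> \<le> (\<Sum>v\<in>V. S + x v)" by (rule sum_mono) (use s1 sle in force)
      also have "\<dots> = real n * S + S" using assms(2) by (simp add: sum.distrib S_def)
      finally show ?thesis .
    qed
    have S0: "S \<ge> 0" unfolding S_def using xnn by (simp add: sum_nonneg)
    have b: "real n \<le> 10 * S^2"
    proof -
      have "real n = (\<Sum>v\<in>V. 1)" using assms(2) by simp
      also have "\<dots> \<le> (\<Sum>v\<in>V. (s v)^2)"
      proof (rule sum_mono)
        fix v assume "v \<in> V"
        then have "1 \<le> s v" by (rule s1)
        then show "1 \<le> (s v)^2" by (simp add: one_le_power)
      qed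
      also have "\<dots> \<le> (\<Sum>v\<in>V. S * (\<Sum>u\<in>V. x u * (?w u v)^2))"
      proof (rule sum_mono)
        fix v assume "v \<in> V"
        have "(s v)^2 = (\<Sum>u\<in>V. sqrt (x u) * (sqrt (x u) * ?w u v))^2"
          unfolding s_def by (rule arg_cong[where f="\<lambda>t. t^2"], rule sum.cong) (use xnn in \<open>auto simp: mult.assoc[symmetric]\<close>)
        also have "\<dots> \<le> (\<Sum>u\<in>V. (sqrt (x u))^2) * (\<Sum>u\<in>V. (sqrt (x u) * ?w u v)^2)"
          by (rule Cauchy_Schwarz_ineq_sum)
        also have "\<dots> = S * (\<Sum>u\<in>V. x u * (?w u v)^2)"
          unfolding S_def by (intro arg_cong2[where f="(*)"] sum.cong) (use xnn in \<open>auto simp: power_mult_distrib\<close>)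
        finally show "(s v)^2 \<le> S * (\<Sum>u\<in>V. x u * (?w u v)^2)" .
      qed
      also have "\<dots> = S * (\<Sum>u\<in>V. x u * (\<Sum>v\<in>V. (?w u v)^2))"
      proof -
        have "(\<Sum>v\<in>V. S * (\<Sum>u\<in>V. x u * (?w u v)^2)) = S * (\<Sum>v\<in>V. \<Sum>u\<in>V. x u * (?w u v)^2)"
          by (rule sum_distrib_left[symmetric])
        also have "\<dots> = S * (\<Sum>u\<in>V. \<Sum>v\<in>V. x u * (?w u v)^2)"
          by (rule arg_cong[where f="(*) S"], rule sum.swap)
        also have "\<dots> = S * (\<Sum>u\<in>V. x u * (\<Sum>v\<in>V. (?w u v)^2))"
          by (rule arg_cong[where f="(*) S"], rule sum.cong[OF refl], rule sum_distrib_left[symmetric])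
        finally show ?thesis .
      qed
      also have "\<dots> \<le> S * (\<Sum>u\<in>V. x u * 10)"
        by (intro mult_left_mono sum_mono) (use xnn Q_bound[OF sc] S0 in auto)
      also have "\<dots> = 10 * S^2" unfolding S_def by (simp add: sum_distrib_right[symmetric] power2_eq_square)
      finally show ?thesis .
    qed
    show ?thesis using arith_final[OF assms(3) a b] y S_def by simp
  qed
  show ?thesis unfolding frac_porous_exp_dom_def
    by (rule cInf_greatest[OF ne]) (rule bound)
qed

end
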